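(* A map $f:\mathbb{X}\to\mathbb{Y}$ in $p\mathsf{Ch}^*_\mathbb{Q}$ has the right lifting property with respect to every map in $\mathbb{J}_0$ if and only if, for every $0\le s\le t<\infty$, the induced map $\mathbb{X}(s)\to\mathbb{X}(t)\times_{\mathbb{Y}(t)}\mathbb{Y}(s)$ is an epimorphism (degreewise surjective).
   Context: $p\mathsf{Ch}^*_\mathbb{Q}=\mathsf{Fun}([0,\infty),\mathsf{Ch}^*_\mathbb{Q})$, non-negatively graded rational cochain complexes with differential raising degree. For $k\ge1$, $D^k$ is the complex with $\mathbb{Q}$ in degrees $k-1$ and $k$ and identity differential; $D^0=0$. $\mathbb{D}^k_s$ is the persistent complex that is $0$ at $r<s$ and $D^k$ at $r\ge s$, with identity structure maps. $\mathbb{J}_0=\{\mathbb{D}^k_t\hookrightarrow\mathbb{D}^k_s : k\in\mathbb{N},\ 0\le s<t<\infty\}$ (the evident inclusions). The map $\mathbb{X}(s)\to\mathbb{X}(t)\times_{\mathbb{Y}(t)}\mathbb{Y}(s)$ is induced by the structure map $\mathbb{X}(s\le t)$ and $f(s)$. *)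

theory Defs
  imports Complex_Main
begin

class qvs = ab_group_add +
  fixes qscale :: "rat \<Rightarrow> 'a \<Rightarrow> 'a"
  assumes qscale_add_right: "qscale a (x + y) = qscale a x + qscale a y"
    and qscale_add_left: "qscale (a + b) x = qscale a x + qscale b x"
    and qscale_assoc: "qscale a (qscale b x) = qscale (a * b) x"
    and qscale_one: "qscale 1 x = x"

instantiation rat :: qvs
begin
definition qscale_rat :: "rat \<Rightarrow> rat \<Rightarrow> rat" where "qscale_rat a x = a * x"
instance by standard (auto simp: qscale_rat_def algebra_simps)
end

definition qsubspace :: "'v::qvs set \<Rightarrow> bool" where
  "qsubspace S \<longleftrightarrow> 0 \<in> S \<and> (\<forall>x\<in>S. \<forall>y\<in>S. x + y \<in> S) \<and> (\<forall>c. \<forall>x\<in>S. qscale c x \<in> S)"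

definition qlinear_on :: "'v::qvs set \<Rightarrow> ('v \<Rightarrow> 'w::qvs) \<Rightarrow> bool" where
  "qlinear_on A g \<longleftrightarrow> (\<forall>x\<in>A. \<forall>y\<in>A. g (x + y) = g x + g y) \<and>
                       (\<forall>c. \<forall>x\<in>A. g (qscale c x) = qscale c (g x))"

text \<open>Ambient type 'v; pC r n is the degree-n part of the complex at time r (a subspace),
  pd r n is the differential degree n to n+1 at time r, pstr s t n is the structure map
  from time s to time t in degree n.\<close>

record 'v pcx =
  pC :: "real \<Rightarrow> nat \<Rightarrow> 'v set"
  pd :: "real \<Rightarrow> nat \<Rightarrow> 'v \<Rightarrow> 'v"
  pstr :: "real \<Rightarrow> real \<Rightarrow> nat \<Rightarrow> 'v \<Rightarrow> 'v"

definition is_pcx :: "'v::qvs pcx \<Rightarrow> bool" where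
  "is_pcx X \<longleftrightarrow>
    (\<forall>r n. 0 \<le> r \<longrightarrow>
       qsubspace (pC X r n) \<and>
       pd X r n ` pC X r n \<subseteq> pC X r (Suc n) \<and>
       qlinear_on (pC X r n) (pd X r n) \<and>
       (\<forall>x\<in>pC X r n. pd X r (Suc n) (pd X r n x) = 0) \<and>
       (\<forall>x\<in>pC X r n. pstr X r r n x = x)) \<and>
    (\<forall>s t n. 0 \<le> s \<and> s \<le> t \<longrightarrow>
       pstr X s t n ` pC X s n \<subseteq> pC X t n \<and>
       qlinear_on (pC X s n) (pstr X s t n) \<and>
       (\<forall>x\<in>pC X s n. pstr X s t (Suc n) (pd X s n x) = pd X t n (pstr X s t n x))) \<and>
    (\<forall>s t u n. 0 \<le> s \<and> s \<le> t \<and> t \<le> u \<longrightarrow>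
       (\<forall>x\<in>pC X s n. pstr X t u n (pstr X s t n x) = pstr X s u n x))"

definition is_pmor :: "'v::qvs pcx \<Rightarrow> 'w::qvs pcx \<Rightarrow> (real \<Rightarrow> nat \<Rightarrow> 'v \<Rightarrow> 'w) \<Rightarrow> bool" where
  "is_pmor X Y g \<longleftrightarrow>
    (\<forall>r n. 0 \<le> r \<longrightarrow>
       g r n ` pC X r n \<subseteq> pC Y r n \<and>
       qlinear_on (pC X r n) (g r n) \<and>
       (\<forall>x\<in>pC X r n. g r (Suc n) (pd X r n x) = pd Y r n (g r n x))) \<and>
    (\<forall>s t n. 0 \<le> s \<and> s \<le> t \<longrightarrow>
       (\<forall>x\<in>pC X s n. g t n (pstr X s t n x) = pstr Y s t n (g s n x)))"

definition pmor_eq :: "'v pcx \<Rightarrow> (real \<Rightarrow> nat \<Rightarrow> 'v \<Rightarrow> 'w) \<Rightarrow> (real \<Rightarrow> nat \<Rightarrow> 'v \<Rightarrow> 'w) \<Rightarrow> bool" where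
  "pmor_eq X g h \<longleftrightarrow> (\<forall>r n. 0 \<le> r \<longrightarrow> (\<forall>x\<in>pC X r n. g r n x = h r n x))"

definition pcomp :: "(real \<Rightarrow> nat \<Rightarrow> 'b \<Rightarrow> 'c) \<Rightarrow> (real \<Rightarrow> nat \<Rightarrow> 'a \<Rightarrow> 'b) \<Rightarrow> (real \<Rightarrow> nat \<Rightarrow> 'a \<Rightarrow> 'c)" where
  "pcomp g h = (\<lambda>r n x. g r n (h r n x))"

definition has_rlp ::
  "'a::qvs pcx \<Rightarrow> 'b::qvs pcx \<Rightarrow> (real \<Rightarrow> nat \<Rightarrow> 'a \<Rightarrow> 'b) \<Rightarrow>
   'v::qvs pcx \<Rightarrow> 'w::qvs pcx \<Rightarrow> (real \<Rightarrow> nat \<Rightarrow> 'v \<Rightarrow> 'w) \<Rightarrow> bool" where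
  "has_rlp A B i X Y f \<longleftrightarrow>
    (\<forall>u v. is_pmor A X u \<and> is_pmor B Y v \<and> pmor_eq A (pcomp f u) (pcomp v i) \<longrightarrow>
       (\<exists>h. is_pmor B X h \<and> pmor_eq A (pcomp h i) u \<and> pmor_eq B (pcomp f h) v))"

text \<open>The disk D^k_s: zero before time s, D^k (Q in degrees k-1 and k, identity differential)
  from time s on, identity structure maps; D^0 = 0.\<close>

definition disk :: "nat \<Rightarrow> real \<Rightarrow> rat pcx" where
  "disk k s = \<lparr> pC = (\<lambda>r n. if s \<le> r \<and> 1 \<le> k \<and> (n + 1 = k \<or> n = k) then UNIV else {0}),
                pd = (\<lambda>r n x. if s \<le> r \<and> n + 1 = k then x else 0),
                pstr = (\<lambda>r r' n x. x) \<rparr>"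

text \<open>The evident inclusion D^k_t \<hookrightarrow> D^k_s (for s < t).\<close>

definition disk_incl :: "real \<Rightarrow> nat \<Rightarrow> rat \<Rightarrow> rat" where
  "disk_incl = (\<lambda>r n x. x)"

end

theory Submission
  imports Defs
begin

lemma qscale_0_left[simp]: "qscale 0 (x::'a::qvs) = 0"
proof -
  have "qscale (0+0) x = qscale 0 x + qscale 0 x" by (rule qscale_add_left)
  then show ?thesis by simp
qed

lemma qscale_0_right[simp]: "qscale c (0::'a::qvs) = 0"
proof -
  have "qscale c (0+0) = qscale c 0 + qscale c (0::'a)" by (rule qscale_add_right)
  then show ?thesis by simp
qed

lemma qscale_rat1[simp]: "qscale q (1::rat) = q"
  by (simp add: qscale_rat_def)

lemma qscale_rat[simp]: "qscale c (q::rat) = c * q"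
  by (simp add: qscale_rat_def)

lemma lin0: "qlinear_on A g \<Longrightarrow> 0 \<in> A \<Longrightarrow> g 0 = 0"
  unfolding qlinear_on_def by (metis add_cancel_right_right)

lemma linsc: "qlinear_on A g \<Longrightarrow> x \<in> A \<Longrightarrow> g (qscale c x) = qscale c (g x)"
  unfolding qlinear_on_def by blast

lemma sub0: "qsubspace S \<Longrightarrow> 0 \<in> S" unfolding qsubspace_def by blast
lemma subsc: "qsubspace S \<Longrightarrow> x \<in> S \<Longrightarrow> qscale c x \<in> S" unfolding qsubspace_def by blast

context
  fixes X :: "'v::qvs pcx"
  assumes X: "is_pcx X"
begin

lemma X_A: "0 \<le> r \<Longrightarrow> qsubspace (pC X r n) \<and>
       pd X r n ` pC X r n \<subseteq> pC X r (Suc n) \<and>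
       qlinear_on (pC X r n) (pd X r n) \<and>
       (\<forall>x\<in>pC X r n. pd X r (Suc n) (pd X r n x) = 0) \<and>
       (\<forall>x\<in>pC X r n. pstr X r r n x = x)"
  using X[unfolded is_pcx_def, THEN conjunct1] by blast
lemma X_B: "0 \<le> s \<Longrightarrow> s \<le> t \<Longrightarrow>
       pstr X s t n ` pC X s n \<subseteq> pC X t n \<and>
       qlinear_on (pC X s n) (pstr X s t n) \<and>
       (\<forall>x\<in>pC X s n. pstr X s t (Suc n) (pd X s n x) = pd X t n (pstr X s t n x))"
  using X[unfolded is_pcx_def, THEN conjunct2, THEN conjunct1] by blast
lemma X_C: "0 \<le> s \<Longrightarrow> s \<le> t \<Longrightarrow> t \<le> u \<Longrightarrow>
       (\<forall>x\<in>pC X s n. pstr X t u n (pstr X s t n x) = pstr X s u n x)"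
  using X[unfolded is_pcx_def, THEN conjunct2, THEN conjunct2] by blast
lemma X_sub: "0 \<le> r \<Longrightarrow> qsubspace (pC X r n)" using X_A by blast
lemma X_0: "0 \<le> r \<Longrightarrow> 0 \<in> pC X r n" using X_sub sub0 by blast
lemma X_sc: "0 \<le> r \<Longrightarrow> x \<in> pC X r n \<Longrightarrow> qscale c x \<in> pC X r n" using X_sub subsc by blast
lemma X_dC: "0 \<le> r \<Longrightarrow> x \<in> pC X r n \<Longrightarrow> pd X r n x \<in> pC X r (Suc n)" using X_A by blast
lemma X_dlin: "0 \<le> r \<Longrightarrow> qlinear_on (pC X r n) (pd X r n)" using X_A by blast
lemma X_dd: "0 \<le> r \<Longrightarrow> x \<in> pC X r n \<Longrightarrow> pd X r (Suc n) (pd X r n x) = 0" using X_A by blast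
lemma X_id: "0 \<le> r \<Longrightarrow> x \<in> pC X r n \<Longrightarrow> pstr X r r n x = x" using X_A by blast
lemma X_sC: "0 \<le> s \<Longrightarrow> s \<le> t \<Longrightarrow> x \<in> pC X s n \<Longrightarrow> pstr X s t n x \<in> pC X t n" using X_B by blast
lemma X_slin: "0 \<le> s \<Longrightarrow> s \<le> t \<Longrightarrow> qlinear_on (pC X s n) (pstr X s t n)" using X_B by blast
lemma X_sd: "0 \<le> s \<Longrightarrow> s \<le> t \<Longrightarrow> x \<in> pC X s n \<Longrightarrow> pstr X s t (Suc n) (pd X s n x) = pd X t n (pstr X s t n x)" using X_B by blast
lemma X_comp: "0 \<le> s \<Longrightarrow> s \<le> t \<Longrightarrow> t \<le> u \<Longrightarrow> x \<in> pC X s n \<Longrightarrow> pstr X t u n (pstr X s t n x) = pstr X s u n x" using X_C by blast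

end

lemma pm_A: "is_pmor X Y g \<Longrightarrow> 0 \<le> r \<Longrightarrow> g r n ` pC X r n \<subseteq> pC Y r n \<and>
       qlinear_on (pC X r n) (g r n) \<and>
       (\<forall>x\<in>pC X r n. g r (Suc n) (pd X r n x) = pd Y r n (g r n x))"
  unfolding is_pmor_def by (drule conjunct1) blast
lemma pm_B: "is_pmor X Y g \<Longrightarrow> 0 \<le> s \<Longrightarrow> s \<le> t \<Longrightarrow> 
       (\<forall>x\<in>pC X s n. g t n (pstr X s t n x) = pstr Y s t n (g s n x))"
  unfolding is_pmor_def by (drule conjunct2) blast
lemma pm_img: "is_pmor X Y g \<Longrightarrow> 0 \<le> r \<Longrightarrow> x \<in> pC X r n \<Longrightarrow> g r n x \<in> pC Y r n"
  using pm_A by blast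
lemma pm_lin: "is_pmor X Y g \<Longrightarrow> 0 \<le> r \<Longrightarrow> qlinear_on (pC X r n) (g r n)"
  using pm_A by blast
lemma pm_d: "is_pmor X Y g \<Longrightarrow> 0 \<le> r \<Longrightarrow> x \<in> pC X r n \<Longrightarrow> g r (Suc n) (pd X r n x) = pd Y r n (g r n x)"
  using pm_A by blast
lemma pm_s: "is_pmor X Y g \<Longrightarrow> 0 \<le> s \<Longrightarrow> s \<le> t \<Longrightarrow> x \<in> pC X s n \<Longrightarrow> g t n (pstr X s t n x) = pstr Y s t n (g s n x)"
  using pm_B by blast

definition mk :: "'v::qvs pcx \<Rightarrow> real \<Rightarrow> nat \<Rightarrow> 'v \<Rightarrow> real \<Rightarrow> nat \<Rightarrow> rat \<Rightarrow> 'v" where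
  "mk X s n x = (\<lambda>r m q. if m = n then qscale q (pstr X s r n x)
     else if m = Suc n then qscale q (pd X r n (pstr X s r n x)) else 0)"

lemma mk0[simp]: "mk X s n x r m 0 = 0" by (simp add: mk_def qscale_one)

lemma diskC: "pC (disk k s) r m = (if s \<le> r \<and> 1 \<le> k \<and> (m + 1 = k \<or> m = k) then UNIV else {0})"
  by (simp add: disk_def)
lemma diskd: "pd (disk k s) r m q = (if s \<le> r \<and> m + 1 = k then q else 0)"
  by (simp add: disk_def)
lemma disks: "pstr (disk k s) r r' m q = q"
  by (simp add: disk_def)

lemma diskC_cases: "q \<in> pC (disk (Suc n) s) r m \<Longrightarrow> q = 0 \<or> (s \<le> r \<and> (m = n \<or> m = Suc n))"
  by (auto simp: diskC split: if_splits)

lemma mk_pmor: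
  assumes X: "is_pcx X" and s: "0 \<le> s" and x: "x \<in> pC X s n"
  shows "is_pmor (disk (Suc n) s) X (mk X s n x)"
proof -
  have img: "mk X s n x r m q \<in> pC X r m" if r: "0 \<le> r" and q: "q \<in> pC (disk (Suc n) s) r m" for r m q
  proof -
    from diskC_cases[OF q] show ?thesis
    proof
      assume "q = 0" then show ?thesis using X_0[OF X r] by simp
    next
      assume h: "s \<le> r \<and> (m = n \<or> m = Suc n)"
      have p: "pstr X s r n x \<in> pC X r n" using X_sC[OF X s _ x] h by blast
      show ?thesis using h X_sc[OF X r p] X_sc[OF X r X_dC[OF X r p]] by (auto simp: mk_def)
    qed
  qed
  have lin: "qlinear_on A (mk X s n x r m)" for A r m
    unfolding qlinear_on_def mk_def by (auto simp: qscale_add_left qscale_assoc)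
  have dd: "mk X s n x r (Suc m) (pd (disk (Suc n) s) r m q) = pd X r m (mk X s n x r m q)"
    if r: "0 \<le> r" and q: "q \<in> pC (disk (Suc n) s) r m" for r m q
  proof -
    from diskC_cases[OF q] show ?thesis
    proof
      assume "q = 0" then show ?thesis using lin0[OF X_dlin[OF X r] X_0[OF X r]]
        by (simp add: diskd)
    next
      assume h: "s \<le> r \<and> (m = n \<or> m = Suc n)"
      have p: "pstr X s r n x \<in> pC X r n" using X_sC[OF X s _ x] h by blast
      show ?thesis
      proof (cases "m = n")
        case True
        then show ?thesis using h linsc[OF X_dlin[OF X r] p] by (simp add: diskd mk_def)
      next
        case False
        then have m: "m = Suc n" using h by blast
        show ?thesis using m h linsc[OF X_dlin[OF X r] X_dC[OF X r p]] X_dd[OF X r p]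
          by (simp add: diskd mk_def)
      qed
    qed
  qed
  have nat: "mk X s n x t' m (pstr (disk (Suc n) s) s' t' m q) = pstr X s' t' m (mk X s n x s' m q)"
    if st: "0 \<le> s'" "s' \<le> t'" and q: "q \<in> pC (disk (Suc n) s) s' m" for s' t' m q
  proof -
    from diskC_cases[OF q] show ?thesis
    proof
      assume "q = 0" then show ?thesis using lin0[OF X_slin[OF X st] X_0[OF X st(1)]]
        by (simp add: disks)
    next
      assume h: "s \<le> s' \<and> (m = n \<or> m = Suc n)"
      have p: "pstr X s s' n x \<in> pC X s' n" using X_sC[OF X s _ x] h by blast
      have c: "pstr X s' t' n (pstr X s s' n x) = pstr X s t' n x"
        using X_comp[OF X s _ st(2) x] h by blast
      show ?thesis
      proof (cases "m = n")
        case True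
        then show ?thesis using h linsc[OF X_slin[OF X st] p] c by (simp add: disks mk_def)
      next
        case False
        then have m: "m = Suc n" using h by blast
        show ?thesis using m h linsc[OF X_slin[OF X st] X_dC[OF X st(1) p]] X_sd[OF X st p] c
          by (simp add: disks mk_def)
      qed
    qed
  qed
  show ?thesis unfolding is_pmor_def using img lin dd nat by blast
qed


lemma mor_char:
  assumes X: "is_pcx X" and g: "is_pmor (disk (Suc n) s) X g" and s: "0 \<le> s"
    and r: "0 \<le> r" and q: "q \<in> pC (disk (Suc n) s) r m"
  shows "g r m q = mk X s n (g s n 1) r m q"
proof -
  have glin: "qlinear_on (pC (disk (Suc n) s) r' m') (g r' m')" if "0 \<le> r'" for r' m'
    using pm_lin[OF g that] .
  from diskC_cases[OF q] show ?thesis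
  proof
    assume "q = 0" then show ?thesis using lin0[OF glin[OF r]] q by simp
  next
    assume h: "s \<le> r \<and> (m = n \<or> m = Suc n)"
    have one: "(1::rat) \<in> pC (disk (Suc n) s) r m" using h by (auto simp: diskC)
    have "g r m q = g r m (qscale q 1)" by simp
    also have "\<dots> = qscale q (g r m 1)" using linsc[OF glin[OF r] one] .
    finally have e: "g r m q = qscale q (g r m 1)" .
    have one': "(1::rat) \<in> pC (disk (Suc n) s) s n" by (auto simp: diskC)
    have gn: "g r n 1 = pstr X s r n (g s n 1)"
      using pm_s[OF g s _ one', of r] h by (simp add: disks)
    show ?thesis
    proof (cases "m = n")
      case True then show ?thesis using e gn by (simp add: mk_def qscale_one)
    next
      case False
      then have m: "m = Suc n" using h by blast
      have one'': "(1::rat) \<in> pC (disk (Suc n) s) r n" using h by (auto simp: diskC)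
      have "g r (Suc n) 1 = g r (Suc n) (pd (disk (Suc n) s) r n 1)" using h by (simp add: diskd)
      also have "\<dots> = pd X r n (g r n 1)" using pm_d[OF g r one''] .
      finally show ?thesis using e gn m by (simp add: mk_def qscale_one)
    qed
  qed
qed

lemma mk_f:
  assumes X: "is_pcx X" and Y: "is_pcx Y" and f: "is_pmor X Y f" and s: "0 \<le> s"
    and x: "x \<in> pC X s n"
    and r: "0 \<le> r" and q: "q \<in> pC (disk (Suc n) s) r m"
  shows "f r m (mk X s n x r m q) = mk Y s n (f s n x) r m q"
proof -
  have flin: "qlinear_on (pC X r' m') (f r' m')" if "0 \<le> r'" for r' m'
    using pm_lin[OF f that] .
  from diskC_cases[OF q] show ?thesis
  proof
    assume "q = 0" then show ?thesis using lin0[OF flin[OF r] X_0[OF X r]] by simp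
  next
    assume h: "s \<le> r \<and> (m = n \<or> m = Suc n)"
    have p: "pstr X s r n x \<in> pC X r n" using X_sC[OF X s _ x] h by blast
    have fp: "f r n (pstr X s r n x) = pstr Y s r n (f s n x)"
      using pm_s[OF f s _ x, of r] h by blast
    show ?thesis
    proof (cases "m = n")
      case True then show ?thesis using linsc[OF flin[OF r] p] fp by (simp add: mk_def qscale_one)
    next
      case False
      then have m: "m = Suc n" using h by blast
      have "f r (Suc n) (pd X r n (pstr X s r n x)) = pd Y r n (f r n (pstr X s r n x))"
        using pm_d[OF f r p] .
      then show ?thesis using m linsc[OF flin[OF r] X_dC[OF X r p]] fp by (simp add: mk_def qscale_one)
    qed
  qed
qed

lemma mk_shift:
  assumes X: "is_pcx X" and s: "0 \<le> s" "s \<le> t" "t \<le> r" and x: "x \<in> pC X s n"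
  shows "mk X s n x r m q = mk X t n (pstr X s t n x) r m q"
  using X_comp[OF X s x] by (simp add: mk_def qscale_one)


lemma pmor_eqD: "pmor_eq A g h \<Longrightarrow> 0 \<le> r \<Longrightarrow> x \<in> pC A r n \<Longrightarrow> g r n x = h r n x"
  unfolding pmor_eq_def by blast

lemma zero_pmor:
  fixes X :: "'v::qvs pcx"
  assumes X: "is_pcx X"
  shows "is_pmor (disk 0 s) X (\<lambda>r m q. 0)"
proof -
  have C: "pC (disk 0 s) r m = {0}" for r m by (simp add: diskC)
  have l: "qlinear_on {0::rat} (\<lambda>q. 0::'v)" by (simp add: qlinear_on_def)
  show ?thesis unfolding is_pmor_def C
    using X_0[OF X] lin0[OF X_dlin[OF X] X_0[OF X]] lin0[OF X_slin[OF X] X_0[OF X]] l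
    by (simp add: diskd disks)
qed

theorem mainTheorem5:
  fixes X :: "'v::qvs pcx" and Y :: "'w::qvs pcx" and f :: "real \<Rightarrow> nat \<Rightarrow> 'v \<Rightarrow> 'w"
  assumes "is_pcx X" and "is_pcx Y" and "is_pmor X Y f"
  shows "(\<forall>k s t. 0 \<le> s \<and> s < t \<longrightarrow> has_rlp (disk k t) (disk k s) disk_incl X Y f)
     \<longleftrightarrow> (\<forall>s t n. 0 \<le> s \<and> s \<le> t \<longrightarrow>
           (\<forall>a\<in>pC X t n. \<forall>b\<in>pC Y s n. f t n a = pstr Y s t n b \<longrightarrow>
              (\<exists>x\<in>pC X s n. pstr X s t n x = a \<and> f s n x = b)))"
proof
  note X = assms(1) and Y = assms(2) and f = assms(3)
  assume R: "\<forall>k s t. 0 \<le> s \<and> s < t \<longrightarrow> has_rlp (disk k t) (disk k s) disk_incl X Y f"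
  show "\<forall>s t n. 0 \<le> s \<and> s \<le> t \<longrightarrow>
           (\<forall>a\<in>pC X t n. \<forall>b\<in>pC Y s n. f t n a = pstr Y s t n b \<longrightarrow>
              (\<exists>x\<in>pC X s n. pstr X s t n x = a \<and> f s n x = b))"
  proof (intro allI impI ballI)
    fix s t n a b
    assume st: "0 \<le> s \<and> s \<le> t" and a: "a \<in> pC X t n" and b: "b \<in> pC Y s n"
      and e: "f t n a = pstr Y s t n b"
    show "\<exists>x\<in>pC X s n. pstr X s t n x = a \<and> f s n x = b"
    proof (cases "s = t")
      case True
      then show ?thesis using a e X_id[OF X _ a] X_id[OF Y _ b] st by auto
    next
      case False
      then have st': "0 \<le> s" "s < t" "0 \<le> t" using st by auto
      have rl: "has_rlp (disk (Suc n) t) (disk (Suc n) s) disk_incl X Y f" using R st' by simp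
      let ?u = "mk X t n a" and ?v = "mk Y s n b"
      have u: "is_pmor (disk (Suc n) t) X ?u" by (rule mk_pmor[OF X st'(3) a])
      have v: "is_pmor (disk (Suc n) s) Y ?v" by (rule mk_pmor[OF Y st'(1) b])
      have comm: "pmor_eq (disk (Suc n) t) (pcomp f ?u) (pcomp ?v disk_incl)"
        unfolding pmor_eq_def pcomp_def disk_incl_def
      proof (intro allI impI ballI)
        fix r m q assume r: "0 \<le> r" and q: "q \<in> pC (disk (Suc n) t) r m"
        from diskC_cases[OF q] show "f r m (mk X t n a r m q) = mk Y s n b r m q"
        proof
          assume "q = 0" then show ?thesis
            using lin0[OF pm_lin[OF f r] X_0[OF X r]] by simp
        next
          assume h: "t \<le> r \<and> (m = n \<or> m = Suc n)"
          have "f r m (mk X t n a r m q) = mk Y t n (f t n a) r m q"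
            by (rule mk_f[OF X Y f st'(3) a r q])
          also have "\<dots> = mk Y s n b r m q"
            using mk_shift[OF Y st'(1) _ _ b, of t r] st' h e by simp
          finally show ?thesis .
        qed
      qed
      obtain h where h: "is_pmor (disk (Suc n) s) X h"
        and h1: "pmor_eq (disk (Suc n) t) (pcomp h disk_incl) ?u"
        and h2: "pmor_eq (disk (Suc n) s) (pcomp f h) ?v"
        using rl[unfolded has_rlp_def, rule_format, OF conjI[OF u conjI[OF v comm]]] by blast
      have one_s: "(1::rat) \<in> pC (disk (Suc n) s) s n" by (simp add: diskC)
      have one_t: "(1::rat) \<in> pC (disk (Suc n) t) t n" by (simp add: diskC)
      have xin: "h s n 1 \<in> pC X s n" by (rule pm_img[OF h st'(1) one_s])
      have "pstr X s t n (h s n 1) = h t n 1"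
        using pm_s[OF h st'(1) _ one_s, of t] st' by (simp add: disks)
      also have "\<dots> = ?u t n 1" using pmor_eqD[OF h1 st'(3) one_t]
        unfolding pcomp_def disk_incl_def by simp
      also have "\<dots> = a" using X_id[OF X st'(3) a] by (simp add: mk_def qscale_one)
      finally have p1: "pstr X s t n (h s n 1) = a" .
      have "f s n (h s n 1) = ?v s n 1" using pmor_eqD[OF h2 st'(1) one_s]
        unfolding pcomp_def by simp
      also have "\<dots> = b" using X_id[OF Y st'(1) b] by (simp add: mk_def qscale_one)
      finally show ?thesis using xin p1 by blast
    qed
  qed
next
  note X = assms(1) and Y = assms(2) and f = assms(3)
  assume S: "\<forall>s t n. 0 \<le> s \<and> s \<le> t \<longrightarrow>
           (\<forall>a\<in>pC X t n. \<forall>b\<in>pC Y s n. f t n a = pstr Y s t n b \<longrightarrow>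
              (\<exists>x\<in>pC X s n. pstr X s t n x = a \<and> f s n x = b))"
  show "\<forall>k s t. 0 \<le> s \<and> s < t \<longrightarrow> has_rlp (disk k t) (disk k s) disk_incl X Y f"
  proof (intro allI impI)
    fix k :: nat and s t :: real assume st: "0 \<le> s \<and> s < t"
    then have st': "0 \<le> s" "s \<le> t" "0 \<le> t" by linarith+
    show "has_rlp (disk k t) (disk k s) disk_incl X Y f"
      unfolding has_rlp_def
    proof (intro allI impI)
      fix u v
      assume uv: "is_pmor (disk k t) X u \<and> is_pmor (disk k s) Y v \<and>
        pmor_eq (disk k t) (pcomp f u) (pcomp v disk_incl)"
      then have u: "is_pmor (disk k t) X u" and v: "is_pmor (disk k s) Y v"
        and comm: "pmor_eq (disk k t) (pcomp f u) (pcomp v disk_incl)" by auto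
      show "\<exists>h. is_pmor (disk k s) X h \<and> pmor_eq (disk k t) (pcomp h disk_incl) u \<and>
          pmor_eq (disk k s) (pcomp f h) v"
      proof (cases k)
        case 0
        have C: "pC (disk 0 s') r m = {0}" for s' r m by (simp add: diskC)
        show ?thesis
        proof (intro exI conjI)
          show "is_pmor (disk k s) X (\<lambda>r m q. 0)" using zero_pmor[OF X] 0 by simp
          show "pmor_eq (disk k t) (pcomp (\<lambda>r m q. 0) disk_incl) u"
            unfolding pmor_eq_def pcomp_def using 0 lin0[OF pm_lin[OF u]] by (auto simp: C)
          show "pmor_eq (disk k s) (pcomp f (\<lambda>r m q. 0)) v"
            unfolding pmor_eq_def pcomp_def using 0 lin0[OF pm_lin[OF v]]
              lin0[OF pm_lin[OF f] X_0[OF X]] by (auto simp: C)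
        qed
      next
        case (Suc n)
        have one_s: "(1::rat) \<in> pC (disk (Suc n) s) s n" by (simp add: diskC)
        have one_t: "(1::rat) \<in> pC (disk (Suc n) t) t n" by (simp add: diskC)
        have one_ts: "(1::rat) \<in> pC (disk (Suc n) s) t n" using st' by (simp add: diskC)
        have u': "is_pmor (disk (Suc n) t) X u" using u Suc by simp
        have v': "is_pmor (disk (Suc n) s) Y v" using v Suc by simp
        define a where "a = u t n 1"
        define b where "b = v s n 1"
        have a: "a \<in> pC X t n" unfolding a_def by (rule pm_img[OF u' st'(3) one_t])
        have b: "b \<in> pC Y s n" unfolding b_def by (rule pm_img[OF v' st'(1) one_s])
        have "f t n a = v t n 1" using pmor_eqD[OF comm st'(3), of 1 n] Suc one_t
          unfolding pcomp_def disk_incl_def a_def by simp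
        also have "\<dots> = pstr Y s t n b"
          using pm_s[OF v' st'(1) st'(2) one_s] unfolding b_def by (simp add: disks)
        finally have e: "f t n a = pstr Y s t n b" .
        obtain x where x: "x \<in> pC X s n" and xa: "pstr X s t n x = a" and xb: "f s n x = b"
          using S[rule_format, OF _ a b e] st' by blast
        show ?thesis
        proof (intro exI conjI)
          show "is_pmor (disk k s) X (mk X s n x)" using mk_pmor[OF X st'(1) x] Suc by simp
          show "pmor_eq (disk k t) (pcomp (mk X s n x) disk_incl) u"
            unfolding pmor_eq_def pcomp_def disk_incl_def Suc
          proof (intro allI impI ballI)
            fix r m q assume r: "0 \<le> r" and q: "q \<in> pC (disk (Suc n) t) r m"
            from diskC_cases[OF q] show "mk X s n x r m q = u r m q"
            proof
              assume "q = 0" then show ?thesis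
                using lin0[OF pm_lin[OF u' r]] q by simp
            next
              assume h: "t \<le> r \<and> (m = n \<or> m = Suc n)"
              have "mk X s n x r m q = mk X t n a r m q"
                using mk_shift[OF X st'(1) st'(2) _ x, of r] h xa by simp
              also have "\<dots> = u r m q"
                using mor_char[OF X u' st'(3) r q] unfolding a_def by simp
              finally show ?thesis .
            qed
          qed
          show "pmor_eq (disk k s) (pcomp f (mk X s n x)) v"
            unfolding pmor_eq_def pcomp_def Suc
          proof (intro allI impI ballI)
            fix r m q assume r: "0 \<le> r" and q: "q \<in> pC (disk (Suc n) s) r m"
            have "f r m (mk X s n x r m q) = mk Y s n b r m q"
              using mk_f[OF X Y f st'(1) x r q] xb by simp
            also have "\<dots> = v r m q"
              using mor_char[OF Y v' st'(1) r q] unfolding b_def by simp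
            finally show "f r m (mk X s n x r m q) = v r m q" .
          qed
        qed
      qed
    qed
  qed
qed

end
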